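(* Let $\mathbb{X}$ be a two-dimensional real Banach space, let $z\in\mathbb{X}$ with $z\neq 0$, and let $\epsilon\in[0,1)$. Then $\overline{B}(z,\epsilon)\cap S_{\mathbb{X}}$ is either empty or path connected.
   Context: $\overline{B}(z,\epsilon)=\{w\in\mathbb{X}:\|w-z\|\leq\epsilon\}$ and $S_{\mathbb{X}}$ is the unit sphere of $\mathbb{X}$. *)

theory Defs
  imports "HOL-Analysis.Analysis"
begin

end

theory Submission
  imports Defs
begin

lemma ray_ge1:
  fixes c d :: "'a::real_normed_vector"
  assumes "norm (c + d) = 1" "norm (c + (1/e) *\<^sub>R d) \<le> 1" "0 < e" "e < 1" "a \<le> 1"
  shows "1 \<le> norm (c + a *\<^sub>R d)"
proof -
  define b where "b = 1/e"
  have b1: "1 < b" using assms by (simp add: b_def)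
  define th where "th = (1 - a) / (b - a)"
  have th0: "0 \<le> th" and th1: "th < 1" using b1 assms(5) by (auto simp: th_def field_simps)
  have ba: "b - a \<noteq> 0" using b1 assms(5) by simp
  have tb: "th * (b - a) = 1 - a" using ba unfolding th_def by simp
  have sc: "(1 - th) * a + th * b = 1" using tb by (simp add: algebra_simps)
  have "c + d = (1 - th) *\<^sub>R (c + a *\<^sub>R d) + th *\<^sub>R (c + b *\<^sub>R d)"
  proof -
    have "(1 - th) *\<^sub>R (c + a *\<^sub>R d) + th *\<^sub>R (c + b *\<^sub>R d) = c + ((1 - th) * a + th * b) *\<^sub>R d"
      by (simp add: algebra_simps)
    then show ?thesis using sc by simp
  qed
  then have "1 \<le> norm ((1 - th) *\<^sub>R (c + a *\<^sub>R d)) + norm (th *\<^sub>R (c + b *\<^sub>R d))"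
    using assms(1) norm_triangle_ineq by metis
  also have "\<dots> = (1 - th) * norm (c + a *\<^sub>R d) + th * norm (c + b *\<^sub>R d)"
    using th0 th1 by simp
  also have "\<dots> \<le> (1 - th) * norm (c + a *\<^sub>R d) + th"
    using assms(2) th0 b_def by (simp add: mult_left_le)
  finally have "(1 - th) * 1 \<le> (1 - th) * norm (c + a *\<^sub>R d)" by (simp add: algebra_simps)
  then show ?thesis using th1 by simp
qed

lemma phi_lemma:
  fixes c x :: "'a::real_normed_vector"
  assumes "norm (x - (1 - e) *\<^sub>R c) \<le> e" "0 < e"
  shows "norm (c + (1 / e) *\<^sub>R (x - c)) \<le> 1"
proof -
  have "c + (1 / e) *\<^sub>R (x - c) = (1 / e) *\<^sub>R (x - (1 - e) *\<^sub>R c)"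
    using assms(2) by (simp add: algebra_simps)
  then have "norm (c + (1 / e) *\<^sub>R (x - c)) = norm (x - (1 - e) *\<^sub>R c) / e"
    using assms(2) by simp
  also have "\<dots> \<le> 1" using assms by simp
  finally show ?thesis .
qed

lemma seg_lemma:
  fixes c x y :: "'a::real_normed_vector"
  assumes e0: "0 < e" and e1: "e < 1"
    and x: "x \<in> cball ((1 - e) *\<^sub>R c) e \<inter> sphere 0 1"
    and y: "y \<in> cball ((1 - e) *\<^sub>R c) e \<inter> sphere 0 1"
    and yx: "y = c + a0 *\<^sub>R (x - c)" and a0: "a0 \<le> 1"
  shows "closed_segment x y \<subseteq> cball ((1 - e) *\<^sub>R c) e \<inter> sphere 0 1"
proof
  fix q assume q: "q \<in> closed_segment x y"
  have qC: "q \<in> cball ((1 - e) *\<^sub>R c) e"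
    using closed_segment_subset[of x "cball ((1 - e) *\<^sub>R c) e" y] x y q by auto
  obtain t where t0: "0 \<le> t" and t1: "t \<le> 1" and qt: "q = (1 - t) *\<^sub>R x + t *\<^sub>R y"
    using q unfolding closed_segment_def by auto
  have nx: "norm x = 1" and ny: "norm y = 1" using x y by auto
  have "norm q \<le> norm ((1 - t) *\<^sub>R x) + norm (t *\<^sub>R y)" unfolding qt by (rule norm_triangle_ineq)
  also have "\<dots> = 1" using t0 t1 nx ny by simp
  finally have le: "norm q \<le> 1" .
  define a where "a = (1 - t) + t * a0"
  have a1: "a \<le> 1" unfolding a_def using t0 a0 by (simp add: mult_left_le)
  have qa: "q = c + a *\<^sub>R (x - c)"
    unfolding qt yx a_def by (simp add: algebra_simps)
  have "norm (x - (1 - e) *\<^sub>R c) \<le> e" using x by (simp add: dist_norm norm_minus_commute)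
  then have "norm (c + (1 / e) *\<^sub>R (x - c)) \<le> 1" using phi_lemma e0 by blast
  moreover have "norm (c + (x - c)) = 1" using nx by simp
  ultimately have "1 \<le> norm (c + a *\<^sub>R (x - c))" using ray_ge1[OF _ _ e0 e1 a1] by blast
  then have "norm q = 1" using le qa by simp
  then show "q \<in> cball ((1 - e) *\<^sub>R c) e \<inter> sphere 0 1" using qC by simp
qed

lemma star_case:
  fixes c :: "'a::real_normed_vector"
  assumes e0: "0 < e" and e1: "e < 1" and c1: "norm c \<le> 1"
  shows "path_connected (cball ((1 - e) *\<^sub>R c) e \<inter> sphere 0 1)"
proof (cases "cball ((1 - e) *\<^sub>R c) e \<inter> sphere 0 1 = {}")
  case True then show ?thesis by simp
next
  case False
  let ?T = "cball ((1 - e) *\<^sub>R c) e \<inter> sphere 0 1"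
  obtain x where x: "x \<in> ?T" using False by blast
  have cC: "c \<in> cball ((1 - e) *\<^sub>R c) e"
  proof -
    have "(1 - e) *\<^sub>R c - c = - (e *\<^sub>R c)" by (simp add: algebra_simps)
    then have "dist ((1 - e) *\<^sub>R c) c = e * norm c" using e0 by (simp add: dist_norm)
    also have "\<dots> \<le> e" using c1 e0 by (simp add: mult_left_le)
    finally show ?thesis by simp
  qed
  have "norm (x - (1 - e) *\<^sub>R c) \<le> e" using x by (simp add: dist_norm norm_minus_commute)
  then have "norm (c + (1 / e) *\<^sub>R (x - c)) \<le> 1" using phi_lemma e0 by blast
  moreover have "norm (c + (x - c)) = 1" using x by simp
  ultimately have "1 \<le> norm (c + 0 *\<^sub>R (x - c))" using ray_ge1[OF _ _ e0 e1, of c "x - c" 0] by simp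
  then have cT: "c \<in> ?T" using c1 cC by simp
  have "starlike ?T"
    unfolding starlike_def
  proof (intro bexI[OF _ cT] ballI)
    fix y assume y: "y \<in> ?T"
    have "closed_segment y c \<subseteq> ?T"
      by (rule seg_lemma[OF e0 e1 y cT, of 0]) simp_all
    then show "closed_segment c y \<subseteq> ?T" by (simp add: closed_segment_commute)
  qed
  then show ?thesis by (rule starlike_imp_path_connected)
qed


context
  fixes c u v :: "'a::real_normed_vector" and e :: real
  assumes e0: "0 < e" and e1: "e < 1" and c1: "1 < norm c"
    and u1: "norm u = 1" and v1: "norm v = 1"
    and uC: "norm (u - (1 - e) *\<^sub>R c) \<le> e" and vC: "norm (v - (1 - e) *\<^sub>R c) \<le> e"
begin

definition dd :: "real \<Rightarrow> 'a" where "dd s = (1 - s) *\<^sub>R (u - c) + s *\<^sub>R (v - c)"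
definition FF :: "real \<Rightarrow> real set" where "FF s = {w. 1 \<le> w \<and> norm (w *\<^sub>R c + dd s) \<le> w}"
definition gg :: "real \<Rightarrow> real" where "gg s = Sup (FF s)"
definition GG :: real where "GG = (norm (u - c) + norm (v - c)) / (norm c - 1)"

lemma dd_norm: "s \<in> {0..1} \<Longrightarrow> norm (dd s) \<le> norm (u - c) + norm (v - c)"
proof -
  assume s: "s \<in> {0..1}"
  have "norm (dd s) \<le> norm ((1 - s) *\<^sub>R (u - c)) + norm (s *\<^sub>R (v - c))"
    unfolding dd_def by (rule norm_triangle_ineq)
  also have "\<dots> = (1 - s) * norm (u - c) + s * norm (v - c)" using s by simp
  also have "\<dots> \<le> norm (u - c) + norm (v - c)"
    using s by (intro add_mono) (auto simp: mult_left_le_one_le)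
  finally show ?thesis .
qed

lemma dd_lin: "dd ((1 - l) * s1 + l * s2) = (1 - l) *\<^sub>R dd s1 + l *\<^sub>R dd s2"
  unfolding dd_def by (simp add: algebra_simps)

lemma dd_diff: "dd s - dd s0 = (s - s0) *\<^sub>R (v - u)"
  unfolding dd_def by (simp add: algebra_simps)

lemma one_FF: "s \<in> {0..1} \<Longrightarrow> 1 \<in> FF s"
proof -
  assume s: "s \<in> {0..1}"
  have "1 *\<^sub>R c + dd s = (1 - s) *\<^sub>R u + s *\<^sub>R v" unfolding dd_def by (simp add: algebra_simps)
  then have "norm (1 *\<^sub>R c + dd s) \<le> norm ((1 - s) *\<^sub>R u) + norm (s *\<^sub>R v)"
    by (metis norm_triangle_ineq)
  also have "\<dots> = 1" using s u1 v1 by simp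
  finally show ?thesis unfolding FF_def by simp
qed

lemma FF_bound: "s \<in> {0..1} \<Longrightarrow> w \<in> FF s \<Longrightarrow> w \<le> GG"
proof -
  assume s: "s \<in> {0..1}" and w: "w \<in> FF s"
  have w1: "1 \<le> w" and wn: "norm (w *\<^sub>R c + dd s) \<le> w" using w unfolding FF_def by auto
  have "w * norm c = norm (w *\<^sub>R c + dd s - dd s)" using w1 by simp
  also have "\<dots> \<le> norm (w *\<^sub>R c + dd s) + norm (dd s)" by (rule norm_triangle_ineq4)
  also have "\<dots> \<le> w + (norm (u - c) + norm (v - c))" using wn dd_norm[OF s] by simp
  finally have "w * (norm c - 1) \<le> norm (u - c) + norm (v - c)" by (simp add: algebra_simps)
  then show ?thesis unfolding GG_def using c1 by (simp add: pos_le_divide_eq)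
qed

lemma FF_closed: "closed (FF s)"
proof -
  have "FF s = {w. 1 \<le> w} \<inter> {w. norm (w *\<^sub>R c + dd s) \<le> w}" unfolding FF_def by auto
  moreover have "closed {w::real. 1 \<le> w}" by (intro closed_Collect_le continuous_intros)
  moreover have "closed {w. norm (w *\<^sub>R c + dd s) \<le> w}" by (intro closed_Collect_le continuous_intros)
  ultimately show ?thesis by auto
qed

lemma gg_mem: "s \<in> {0..1} \<Longrightarrow> gg s \<in> FF s"
  unfolding gg_def using one_FF FF_bound FF_closed
  by (intro closed_contains_Sup) (auto simp: bdd_above_def, blast)

lemma gg_upper: "s \<in> {0..1} \<Longrightarrow> w \<in> FF s \<Longrightarrow> w \<le> gg s"
  unfolding gg_def using FF_bound by (intro cSup_upper) (auto simp: bdd_above_def)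

lemma gg_ge1: "s \<in> {0..1} \<Longrightarrow> 1 \<le> gg s"
  using gg_upper one_FF by blast

lemma gg_le: "s \<in> {0..1} \<Longrightarrow> gg s \<le> GG"
  using gg_mem FF_bound by blast

lemma gg_norm_le: "s \<in> {0..1} \<Longrightarrow> norm (gg s *\<^sub>R c + dd s) \<le> gg s"
  using gg_mem unfolding FF_def by blast

lemma gg_concave:
  assumes s1: "s1 \<in> {0..1}" and s2: "s2 \<in> {0..1}" and l0: "0 \<le> l" and l1: "l \<le> 1"
  shows "(1 - l) * gg s1 + l * gg s2 \<le> gg ((1 - l) * s1 + l * s2)"
proof -
  have sm: "(1 - l) * s1 + l * s2 \<in> {0..1}"
    using s1 s2 l0 l1 convex_bound_le[of s1 1 s2 "1 - l" l]
    by (auto intro!: add_nonneg_nonneg mult_nonneg_nonneg)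
  let ?w = "(1 - l) * gg s1 + l * gg s2"
  have "?w *\<^sub>R c + dd ((1 - l) * s1 + l * s2)
      = (1 - l) *\<^sub>R (gg s1 *\<^sub>R c + dd s1) + l *\<^sub>R (gg s2 *\<^sub>R c + dd s2)"
    unfolding dd_lin by (simp add: algebra_simps)
  then have "norm (?w *\<^sub>R c + dd ((1 - l) * s1 + l * s2))
      \<le> norm ((1 - l) *\<^sub>R (gg s1 *\<^sub>R c + dd s1)) + norm (l *\<^sub>R (gg s2 *\<^sub>R c + dd s2))"
    by (metis norm_triangle_ineq)
  also have "\<dots> = (1 - l) * norm (gg s1 *\<^sub>R c + dd s1) + l * norm (gg s2 *\<^sub>R c + dd s2)"
    using l0 l1 by simp
  also have "\<dots> \<le> ?w"
    using gg_norm_le[OF s1] gg_norm_le[OF s2] l0 l1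
    by (intro add_mono mult_left_mono) auto
  moreover have "(1 - l) * 1 + l * 1 \<le> ?w"
    using gg_ge1[OF s1] gg_ge1[OF s2] l0 l1 by (intro add_mono mult_left_mono) auto
  ultimately have "?w \<in> FF ((1 - l) * s1 + l * s2)"
    unfolding FF_def by simp
  then show ?thesis using gg_upper[OF sm] by blast
qed

lemma gg_norm_eq:
  assumes s: "s \<in> {0..1}"
  shows "norm (gg s *\<^sub>R c + dd s) = gg s"
proof (rule ccontr)
  assume "norm (gg s *\<^sub>R c + dd s) \<noteq> gg s"
  then have lt: "norm (gg s *\<^sub>R c + dd s) < gg s" using gg_norm_le[OF s] by simp
  define eta where "eta = (gg s - norm (gg s *\<^sub>R c + dd s)) / norm c"
  have nc: "0 < norm c" using c1 by linarith
  have eta0: "0 < eta" using lt nc unfolding eta_def by simp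
  have "norm ((gg s + eta) *\<^sub>R c + dd s) \<le> norm (gg s *\<^sub>R c + dd s) + norm (eta *\<^sub>R c)"
    by (metis (no_types, lifting) add.commute add.left_commute norm_triangle_ineq scaleR_left_distrib)
  also have "\<dots> = norm (gg s *\<^sub>R c + dd s) + eta * norm c" using eta0 by simp
  also have "\<dots> = gg s" unfolding eta_def using nc c1 by (auto simp: field_simps)
  also have "\<dots> \<le> gg s + eta" using eta0 by simp
  finally have "gg s + eta \<in> FF s" unfolding FF_def using gg_ge1[OF s] eta0 by simp
  then have "gg s + eta \<le> gg s" using gg_upper[OF s] by blast
  then show False using eta0 by simp
qed

lemma eps_in: "s \<in> {0..1} \<Longrightarrow> norm (e *\<^sub>R c + dd s) \<le> e"
proof -
  assume s: "s \<in> {0..1}"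
  have "e *\<^sub>R c + dd s = (1 - s) *\<^sub>R (u - (1 - e) *\<^sub>R c) + s *\<^sub>R (v - (1 - e) *\<^sub>R c)"
    unfolding dd_def by (simp add: algebra_simps)
  then have "norm (e *\<^sub>R c + dd s) \<le> norm ((1 - s) *\<^sub>R (u - (1 - e) *\<^sub>R c)) + norm (s *\<^sub>R (v - (1 - e) *\<^sub>R c))"
    by (metis norm_triangle_ineq)
  also have "\<dots> = (1 - s) * norm (u - (1 - e) *\<^sub>R c) + s * norm (v - (1 - e) *\<^sub>R c)" using s by simp
  also have "\<dots> \<le> (1 - s) * e + s * e" using s uC vC by (intro add_mono mult_left_mono) auto
  finally show ?thesis by (simp add: algebra_simps)
qed

lemma gg_usc:
  assumes s0: "s0 \<in> {0..1}" and tol: "0 < tol"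
  shows "\<exists>\<delta>>0. \<forall>s\<in>{0..1}. \<bar>s - s0\<bar> < \<delta> \<longrightarrow> gg s < gg s0 + tol"
proof (cases "GG < gg s0 + tol")
  case True
  then show ?thesis using gg_le by (intro exI[of _ 1]) force
next
  case False
  let ?W = "{gg s0 + tol .. GG}"
  let ?psi = "\<lambda>w. norm (w *\<^sub>R c + dd s0) - w"
  have "?W \<noteq> {}" using False by simp
  moreover have "continuous_on ?W ?psi" by (intro continuous_intros)
  ultimately obtain w0 where w0: "w0 \<in> ?W" and wmin: "\<And>w. w \<in> ?W \<Longrightarrow> ?psi w0 \<le> ?psi w"
    using continuous_attains_inf[of ?W ?psi] by auto
  define eta where "eta = ?psi w0"
  have eta0: "0 < eta"
  proof (rule ccontr)
    assume "\<not> 0 < eta"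
    then have "w0 \<in> FF s0" unfolding FF_def eta_def using w0 gg_ge1[OF s0] tol by auto
    then have "w0 \<le> gg s0" using gg_upper[OF s0] by blast
    then show False using w0 tol by simp
  qed
  define K where "K = norm (v - u)"
  have K0: "0 \<le> K" unfolding K_def by simp
  show ?thesis
  proof (intro exI[of _ "eta / (K + 1)"] conjI ballI impI)
    show "0 < eta / (K + 1)" using eta0 K0 by simp
  next
    fix s assume s: "s \<in> {0..1}" and ds: "\<bar>s - s0\<bar> < eta / (K + 1)"
    show "gg s < gg s0 + tol"
    proof (rule ccontr)
      assume "\<not> gg s < gg s0 + tol"
      then have gW: "gg s \<in> ?W" using gg_le[OF s] by simp
      have "\<bar>s - s0\<bar> * K \<le> \<bar>s - s0\<bar> * (K + 1)" by (simp add: mult_left_mono)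
      also have "\<dots> < eta" using ds K0 by (simp add: pos_less_divide_eq)
      finally have sk: "\<bar>s - s0\<bar> * K < eta" .
      have "gg s *\<^sub>R c + dd s0 = (gg s *\<^sub>R c + dd s) - (dd s - dd s0)" by simp
      then have "norm (gg s *\<^sub>R c + dd s0) \<le> norm (gg s *\<^sub>R c + dd s) + norm (dd s - dd s0)"
        by (metis norm_triangle_ineq4)
      also have "\<dots> \<le> gg s + \<bar>s - s0\<bar> * K" unfolding dd_diff K_def using gg_norm_le[OF s] by simp
      finally have "?psi (gg s) < eta" using sk by simp
      moreover have "eta \<le> ?psi (gg s)" unfolding eta_def using wmin[OF gW] .
      ultimately show False by simp
    qed
  qed
qed

lemma gg_lsc:
  assumes s0: "s0 \<in> {0..1}" and tol: "0 < tol"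
  shows "\<exists>\<delta>>0. \<forall>s\<in>{0..1}. \<bar>s - s0\<bar> < \<delta> \<longrightarrow> gg s0 - tol < gg s"
proof -
  define M where "M = GG"
  have M1: "1 \<le> M" unfolding M_def using gg_ge1[OF s0] gg_le[OF s0] by simp
  define d1 where "d1 = (if s0 < 1 then tol * (1 - s0) / M else 1)"
  define d2 where "d2 = (if 0 < s0 then tol * s0 / M else 1)"
  have d1p: "0 < d1" unfolding d1_def using tol M1 by auto
  have d2p: "0 < d2" unfolding d2_def using tol M1 by auto
  show ?thesis
  proof (intro exI[of _ "min d1 d2"] conjI ballI impI)
    show "0 < min d1 d2" using d1p d2p by simp
  next
    fix s assume s: "s \<in> {0..1}" and ds: "\<bar>s - s0\<bar> < min d1 d2"
    have g0M: "gg s0 \<le> M" unfolding M_def using gg_le[OF s0] .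
    consider "s = s0" | "s0 < s" | "s < s0" by linarith
    then show "gg s0 - tol < gg s"
    proof cases
      case 1 then show ?thesis using tol by simp
    next
      case 2
      then have s01: "s0 < 1" using s by simp
      define l where "l = (s - s0) / (1 - s0)"
      have l0: "0 \<le> l" and l1: "l \<le> 1" unfolding l_def using 2 s s01 by auto
      have "l * (1 - s0) = s - s0" unfolding l_def using s01 by simp
      then have sl: "(1 - l) * s0 + l * 1 = s" by (simp add: algebra_simps)
      have "(1 - l) * gg s0 + l * gg 1 \<le> gg s"
        using gg_concave[OF s0, of 1 l] l0 l1 sl by simp
      moreover have "0 \<le> l * gg 1" using l0 gg_ge1[of 1] by simp
      ultimately have "gg s0 - l * gg s0 \<le> gg s" by (simp add: algebra_simps)
      moreover have "l * gg s0 \<le> l * M" using l0 g0M by (simp add: mult_left_mono)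
      moreover have "l * M < tol"
      proof -
        have "s - s0 < tol * (1 - s0) / M" using ds 2 s01 unfolding d1_def by simp
        then have "(s - s0) * M < tol * (1 - s0)" using M1 by (simp add: pos_less_divide_eq)
        then show ?thesis unfolding l_def using s01 by (simp add: field_simps)
      qed
      ultimately show ?thesis by simp
    next
      case 3
      then have s0p: "0 < s0" using s by simp
      define l where "l = (s0 - s) / s0"
      have l0: "0 \<le> l" and l1: "l \<le> 1" unfolding l_def using 3 s s0p by auto
      have "l * s0 = s0 - s" unfolding l_def using s0p by simp
      then have sl: "(1 - l) * s0 + l * 0 = s" by (simp add: algebra_simps)
      have "(1 - l) * gg s0 + l * gg 0 \<le> gg s"
        using gg_concave[OF s0, of 0 l] l0 l1 sl by simp
      moreover have "0 \<le> l * gg 0" using l0 gg_ge1[of 0] by simp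
      ultimately have "gg s0 - l * gg s0 \<le> gg s" by (simp add: algebra_simps)
      moreover have "l * gg s0 \<le> l * M" using l0 g0M by (simp add: mult_left_mono)
      moreover have "l * M < tol"
      proof -
        have "s0 - s < tol * s0 / M" using ds 3 s0p unfolding d2_def by simp
        then have "(s0 - s) * M < tol * s0" using M1 by (simp add: pos_less_divide_eq)
        then show ?thesis unfolding l_def using s0p by (simp add: field_simps)
      qed
      ultimately show ?thesis by simp
    qed
  qed
qed

lemma gg_cont: "continuous_on {0..1} gg"
  unfolding continuous_on_iff
proof (intro ballI allI impI)
  fix s0 :: real and tol :: real assume s0: "s0 \<in> {0..1}" and tol: "0 < tol"
  obtain d1 where d1: "0 < d1" "\<forall>s\<in>{0..1}. \<bar>s - s0\<bar> < d1 \<longrightarrow> gg s < gg s0 + tol"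
    using gg_usc[OF s0 tol] by blast
  obtain d2 where d2: "0 < d2" "\<forall>s\<in>{0..1}. \<bar>s - s0\<bar> < d2 \<longrightarrow> gg s0 - tol < gg s"
    using gg_lsc[OF s0 tol] by blast
  show "\<exists>\<delta>>0. \<forall>s\<in>{0..1}. dist s s0 < \<delta> \<longrightarrow> dist (gg s) (gg s0) < tol"
    using d1 d2 by (intro exI[of _ "min d1 d2"]) (auto simp: dist_real_def abs_less_iff)
qed

definition pp :: "real \<Rightarrow> 'a" where "pp s = c + (1 / gg s) *\<^sub>R dd s"

lemma pp_T: "s \<in> {0..1} \<Longrightarrow> pp s \<in> cball ((1 - e) *\<^sub>R c) e \<inter> sphere 0 1"
proof -
  assume s: "s \<in> {0..1}"
  define g where "g = gg s"
  have g1: "1 \<le> g" unfolding g_def using gg_ge1[OF s] .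
  have ppg: "pp s = (1 / g) *\<^sub>R (g *\<^sub>R c + dd s)" unfolding pp_def g_def using g1
    by (simp add: algebra_simps g_def)
  have n1: "norm (pp s) = 1" unfolding ppg using gg_norm_eq[OF s] g1 by (simp add: g_def)
  define th where "th = (e * g - e) / (g - e)"
  have ge: "0 < g - e" using g1 e1 by simp
  have th0: "0 \<le> th" unfolding th_def using ge e0 g1 by (simp add: mult_left_mono)
  have "e * g - e \<le> g - e" using g1 e1 e0 by (simp add: mult_left_le_one_le)
  then have th1: "th \<le> 1" unfolding th_def using ge by simp
  have "th * (g - e) = e * g - e" unfolding th_def using ge by simp
  then have tsc: "(1 - th) * e + th * g = e * g" by (simp add: algebra_simps)
  have "(e * g) *\<^sub>R c + dd s = (1 - th) *\<^sub>R (e *\<^sub>R c + dd s) + th *\<^sub>R (g *\<^sub>R c + dd s)"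
  proof -
    have "(1 - th) *\<^sub>R (e *\<^sub>R c + dd s) + th *\<^sub>R (g *\<^sub>R c + dd s) = ((1 - th) * e + th * g) *\<^sub>R c + dd s"
      by (simp add: algebra_simps)
    then show ?thesis using tsc by simp
  qed
  then have "norm ((e * g) *\<^sub>R c + dd s) \<le> norm ((1 - th) *\<^sub>R (e *\<^sub>R c + dd s)) + norm (th *\<^sub>R (g *\<^sub>R c + dd s))"
    by (metis norm_triangle_ineq)
  also have "\<dots> = (1 - th) * norm (e *\<^sub>R c + dd s) + th * norm (g *\<^sub>R c + dd s)" using th0 th1 by simp
  also have "\<dots> \<le> (1 - th) * e + th * g"
    using eps_in[OF s] gg_norm_le[OF s] th0 th1 by (intro add_mono mult_left_mono) (auto simp: g_def)
  finally have ne: "norm ((e * g) *\<^sub>R c + dd s) \<le> e * g" using tsc by simp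
  have "pp s - (1 - e) *\<^sub>R c = (1 / g) *\<^sub>R ((e * g) *\<^sub>R c + dd s)"
    unfolding pp_def g_def using g1 by (simp add: algebra_simps g_def)
  then have "norm (pp s - (1 - e) *\<^sub>R c) = norm ((e * g) *\<^sub>R c + dd s) / g" using g1 by simp
  also have "\<dots> \<le> e" using ne g1 by (simp add: pos_divide_le_eq)
  finally show ?thesis using n1 by (simp add: dist_norm norm_minus_commute)
qed

lemma pp_cont: "continuous_on {0..1} pp"
proof -
  have "\<forall>s\<in>{0..1}. gg s \<noteq> 0" using gg_ge1 by fastforce
  then show ?thesis unfolding pp_def dd_def
    by (intro continuous_intros gg_cont) auto
qed

lemma uv_component: "path_component (cball ((1 - e) *\<^sub>R c) e \<inter> sphere 0 1) u v"
proof -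
  let ?T = "cball ((1 - e) *\<^sub>R c) e \<inter> sphere 0 1"
  have uT: "u \<in> ?T" and vT: "v \<in> ?T" using u1 v1 uC vC by (auto simp: dist_norm norm_minus_commute)
  have dd0: "dd 0 = u - c" and dd1: "dd 1 = v - c" unfolding dd_def by simp_all
  have p0: "pp 0 = c + (1 / gg 0) *\<^sub>R (u - c)" unfolding pp_def dd0 ..
  have p1: "pp 1 = c + (1 / gg 1) *\<^sub>R (v - c)" unfolding pp_def dd1 ..
  have "closed_segment u (pp 0) \<subseteq> ?T"
    by (rule seg_lemma[OF e0 e1 uT pp_T p0]) (use gg_ge1[of 0] in auto)
  then have c1: "path_component ?T u (pp 0)" by (rule path_component_linepath)
  have "closed_segment v (pp 1) \<subseteq> ?T"
    by (rule seg_lemma[OF e0 e1 vT pp_T p1]) (use gg_ge1[of 1] in auto)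
  then have c3: "path_component ?T (pp 1) v"
    by (intro path_component_linepath) (simp add: closed_segment_commute)
  have c2: "path_component ?T (pp 0) (pp 1)"
    unfolding path_component_def
    using pp_cont pp_T
    by (intro exI[of _ pp]) (auto simp: path_def path_image_def pathstart_def pathfinish_def)
  show ?thesis using c1 c2 c3 path_component_trans by metis
qed

end


theorem lemma2p1:
  fixes z :: "'a :: banach" and \<epsilon> :: real
  assumes "dim (UNIV :: 'a set) = 2"
    and "z \<noteq> 0"
    and "0 \<le> \<epsilon>" and "\<epsilon> < 1"
  shows "cball z \<epsilon> \<inter> sphere 0 1 = {} \<or> path_connected (cball z \<epsilon> \<inter> sphere 0 1)"
proof (cases "\<epsilon> = 0")
  case True
  then have "cball z \<epsilon> \<inter> sphere 0 1 = {} \<or> cball z \<epsilon> \<inter> sphere 0 1 = {z}" by auto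
  then show ?thesis by auto
next
  case False
  then have e0: "0 < \<epsilon>" using assms(3) by simp
  define c where "c = (1 / (1 - \<epsilon>)) *\<^sub>R z"
  have zc: "z = (1 - \<epsilon>) *\<^sub>R c" unfolding c_def using assms(4) by simp
  show ?thesis
  proof (cases "norm c \<le> 1")
    case True
    then show ?thesis unfolding zc using star_case[OF e0 assms(4)] by blast
  next
    case False
    then have c1: "1 < norm c" by simp
    have "path_connected (cball ((1 - \<epsilon>) *\<^sub>R c) \<epsilon> \<inter> sphere 0 1)"
      unfolding path_connected_component
    proof (intro ballI)
      fix x y assume x: "x \<in> cball ((1 - \<epsilon>) *\<^sub>R c) \<epsilon> \<inter> sphere 0 1"
        and y: "y \<in> cball ((1 - \<epsilon>) *\<^sub>R c) \<epsilon> \<inter> sphere 0 1"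
      show "path_component (cball ((1 - \<epsilon>) *\<^sub>R c) \<epsilon> \<inter> sphere 0 1) x y"
        by (rule uv_component[OF e0 assms(4) c1]) (use x y in \<open>auto simp: dist_norm norm_minus_commute\<close>)
    qed
    then show ?thesis unfolding zc by blast
  qed
qed

end
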